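(* Let $T$ be a c.n.u. contraction on $H$. For $a\in A_T^{\perp_s}$ write $a=(x_0,Tx_0)+(a_+,0)+(0,a_-)$ with $x_0\in\mathbb{K}$, $a_+\in\mathbb{K}^\perp$, $a_-\in\mathbb{K}_*^\perp$ (this decomposition exists and is unique since $A_T^{\perp_s}=A_T\oplus_\perp Q\oplus_\perp Q_*$), and set $\Gamma_+a=a_+$, $\Gamma_-a=a_-$. Then $(\mathbb{K}^\perp,\mathbb{K}_*^\perp,\Gamma_+,\Gamma_-)$ is a boundary quadruple for $A_T^{\perp_s}$.
   Context: $H$ is an infinite-dimensional separable complex Hilbert space. A c.n.u. contraction is $T\in\mathbb{B}(H)$ with $\|T\|\le1$ having no nonzero invariant subspace on which it is unitary. $\mathbb{K}=\ker(I-T^*T)$, $\mathbb{K}_*=\ker(I-TT^* )$. $\mathbb{H}=H\oplus_\perp H$ carries the strong symplectic structure $[(x_1,x_2),(y_1,y_2)]=i(x_1,y_1)_H-i(x_2,y_2)_H$; $S^{\perp_s}=\{a:[a,b]=0\ \forall b\in S\}$. $A_T=\{(x,Tx):x\in\mathbb{K}\}$, $Q=\{(x,0):x\in\mathbb{K}^\perp\}$, $Q_*=\{(0,x):x\in\mathbb{K}_*^\perp\}$. For an isotropic closed subspace $A\subseteq\mathbb{H}$ (i.e. $[a,b]=0$ for $a,b\in A$), a boundary quadruple for $A^{\perp_s}$ is $(H_+,H_-,\Gamma_+,\Gamma_-)$ where $H_\pm$ are Hilbert spaces and $\Gamma_\pm:A^{\perp_s}\to H_\pm$ are linear maps such that $(\Gamma_+,\Gamma_-):A^{\perp_s}\to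 H_+\oplus_\perp H_-$ is bounded, surjective, has kernel exactly $A$, and the abstract Green formula $[a,b]=i(\Gamma_+a,\Gamma_+b)_{H_+}-i(\Gamma_-a,\Gamma_-b)_{H_-}$ holds for all $a,b\in A^{\perp_s}$ (equivalently, $(\Gamma_+,\Gamma_-)$ induces a symplectic topological isomorphism of $A^{\perp_s}/A$ onto $H_+\oplus_\perp H_-$ with the standard structure $i(\cdot,\cdot)_{H_+}-i(\cdot,\cdot)_{H_-}$). *)

theory Defs
  imports "HOL-Analysis.Analysis"
begin

text \<open>The distribution has no complex Hilbert spaces, so we introduce them as a type class:
  a real normed vector space with a complex scalar multiplication extending the real one and
  a complex inner product (conjugate-linear in the first, linear in the second argument)
  inducing the norm.\<close>

class complex_inner = real_normed_vector +
  fixes scaleC :: "complex \<Rightarrow> 'a \<Rightarrow> 'a"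
    and cinner :: "'a \<Rightarrow> 'a \<Rightarrow> complex"
  assumes scaleC_of_real: "scaleC (complex_of_real r) x = scaleR r x"
    and scaleC_add_right: "scaleC c (x + y) = scaleC c x + scaleC c y"
    and scaleC_add_left: "scaleC (c + d) x = scaleC c x + scaleC d x"
    and scaleC_scaleC: "scaleC c (scaleC d x) = scaleC (c * d) x"
    and scaleC_one: "scaleC 1 x = x"
    and cinner_commute: "cinner x y = cnj (cinner y x)"
    and cinner_add_right: "cinner x (y + z) = cinner x y + cinner x z"
    and cinner_scaleC_right: "cinner x (scaleC c y) = c * cinner x y"
    and cinner_self_real: "Im (cinner x x) = 0"
    and cinner_self_nonneg: "0 \<le> Re (cinner x x)"
    and cinner_self_eq_zero: "cinner x x = 0 \<longleftrightarrow> x = 0"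
    and norm_eq_sqrt_cinner: "norm x = sqrt (Re (cinner x x))"

class chilbert_space = complex_inner + complete_space

definition csubspace :: "'a::complex_inner set \<Rightarrow> bool" where
  "csubspace S \<longleftrightarrow> 0 \<in> S \<and> (\<forall>x\<in>S. \<forall>y\<in>S. x + y \<in> S) \<and> (\<forall>c. \<forall>x\<in>S. scaleC c x \<in> S)"

definition closed_csubspace :: "'a::complex_inner set \<Rightarrow> bool" where
  "closed_csubspace S \<longleftrightarrow> csubspace S \<and> closed S"

definition orth :: "'a::complex_inner set \<Rightarrow> 'a set" where
  "orth S = {x. \<forall>y\<in>S. cinner y x = 0}"

definition clinear :: "('a::complex_inner \<Rightarrow> 'b::complex_inner) \<Rightarrow> bool" where
  "clinear f \<longleftrightarrow> (\<forall>x y. f (x + y) = f x + f y) \<and> (\<forall>c x. f (scaleC c x) = scaleC c (f x))"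

definition bounded_clinear :: "('a::complex_inner \<Rightarrow> 'b::complex_inner) \<Rightarrow> bool" where
  "bounded_clinear f \<longleftrightarrow> clinear f \<and> (\<exists>C. \<forall>x. norm (f x) \<le> C * norm x)"

definition is_adjoint :: "('a::complex_inner \<Rightarrow> 'a) \<Rightarrow> ('a \<Rightarrow> 'a) \<Rightarrow> bool" where
  "is_adjoint T Ts \<longleftrightarrow> (\<forall>x y. cinner (T x) y = cinner x (Ts y))"

definition separable_chilbert :: "'a::chilbert_space itself \<Rightarrow> bool" where
  "separable_chilbert _ \<longleftrightarrow> (\<exists>D::'a set. countable D \<and> closure D = UNIV)"

definition infinite_dimensional :: "'a::complex_inner itself \<Rightarrow> bool" where
  "infinite_dimensional _ \<longleftrightarrow>
     \<not> (\<exists>F::'a set. finite F \<and> (\<forall>x. \<exists>c. x = (\<Sum>f\<in>F. scaleC (c f) f)))"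

definition contraction :: "('a::complex_inner \<Rightarrow> 'a) \<Rightarrow> bool" where
  "contraction T \<longleftrightarrow> bounded_clinear T \<and> (\<forall>x. norm (T x) \<le> norm x)"

definition cnu :: "('a::complex_inner \<Rightarrow> 'a) \<Rightarrow> bool" where
  "cnu T \<longleftrightarrow> \<not> (\<exists>M. closed_csubspace M \<and> M \<noteq> {0} \<and> T ` M = M \<and> (\<forall>x\<in>M. norm (T x) = norm x))"

definition cnu_contraction :: "('a::complex_inner \<Rightarrow> 'a) \<Rightarrow> bool" where
  "cnu_contraction T \<longleftrightarrow> contraction T \<and> cnu T"

definition sympl :: "'a::complex_inner \<times> 'a \<Rightarrow> 'a \<times> 'a \<Rightarrow> complex" where
  "sympl a b = \<i> * cinner (fst a) (fst b) - \<i> * cinner (snd a) (snd b)"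

definition s_orth :: "('a::complex_inner \<times> 'a) set \<Rightarrow> ('a \<times> 'a) set" where
  "s_orth S = {a. \<forall>b\<in>S. sympl a b = 0}"

definition isotropic :: "('a::complex_inner \<times> 'a) set \<Rightarrow> bool" where
  "isotropic A \<longleftrightarrow> (\<forall>a\<in>A. \<forall>b\<in>A. sympl a b = 0)"

definition scaleC_pair :: "complex \<Rightarrow> 'a::complex_inner \<times> 'a \<Rightarrow> 'a \<times> 'a" where
  "scaleC_pair c a = (scaleC c (fst a), scaleC c (snd a))"

text \<open>Boundary quadruple for the symplectic orthogonal of A, where the boundary spaces are given as closed
  subspaces Hp, Hm of complex Hilbert spaces (with the inherited inner product).  The
  definition presupposes that A is a closed isotropic subspace; we include this.\<close>
definition boundary_quadruple ::
  "('a::chilbert_space \<times> 'a) set \<Rightarrow> 'b::chilbert_space set \<Rightarrow> 'c::chilbert_space set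
     \<Rightarrow> ('a \<times> 'a \<Rightarrow> 'b) \<Rightarrow> ('a \<times> 'a \<Rightarrow> 'c) \<Rightarrow> bool" where
  "boundary_quadruple A Hp Hm Gp Gm \<longleftrightarrow>
     closed A \<and> (0::'a\<times>'a) \<in> A
     \<and> (\<forall>a\<in>A. \<forall>b\<in>A. a + b \<in> A) \<and> (\<forall>c. \<forall>a\<in>A. scaleC_pair c a \<in> A)
     \<and> isotropic A
     \<and> closed_csubspace Hp \<and> closed_csubspace Hm
     \<and> (\<forall>a\<in>s_orth A. Gp a \<in> Hp \<and> Gm a \<in> Hm)
     \<and> (\<forall>a\<in>s_orth A. \<forall>b\<in>s_orth A. Gp (a + b) = Gp a + Gp b \<and> Gm (a + b) = Gm a + Gm b)
     \<and> (\<forall>c. \<forall>a\<in>s_orth A. Gp (scaleC_pair c a) = scaleC c (Gp a) \<and> Gm (scaleC_pair c a) = scaleC c (Gm a))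
     \<and> (\<exists>C. \<forall>a\<in>s_orth A. norm (Gp a, Gm a) \<le> C * norm a)
     \<and> (\<forall>p\<in>Hp. \<forall>m\<in>Hm. \<exists>a\<in>s_orth A. Gp a = p \<and> Gm a = m)
     \<and> {a\<in>s_orth A. Gp a = 0 \<and> Gm a = 0} = A
     \<and> (\<forall>a\<in>s_orth A. \<forall>b\<in>s_orth A.
          sympl a b = \<i> * cinner (Gp a) (Gp b) - \<i> * cinner (Gm a) (Gm b))"

definition defK :: "('a::complex_inner \<Rightarrow> 'a) \<Rightarrow> ('a \<Rightarrow> 'a) \<Rightarrow> 'a set" where
  "defK T Ts = {x. x - Ts (T x) = 0}"

definition defKs :: "('a::complex_inner \<Rightarrow> 'a) \<Rightarrow> ('a \<Rightarrow> 'a) \<Rightarrow> 'a set" where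
  "defKs T Ts = {x. x - T (Ts x) = 0}"

definition A_T :: "('a::complex_inner \<Rightarrow> 'a) \<Rightarrow> ('a \<Rightarrow> 'a) \<Rightarrow> ('a \<times> 'a) set" where
  "A_T T Ts = {(x, T x) | x. x \<in> defK T Ts}"

definition Gamma_plus :: "('a::complex_inner \<Rightarrow> 'a) \<Rightarrow> ('a \<Rightarrow> 'a) \<Rightarrow> 'a \<times> 'a \<Rightarrow> 'a" where
  "Gamma_plus T Ts a = (THE ap. \<exists>x0 am. x0 \<in> defK T Ts \<and> ap \<in> orth (defK T Ts)
      \<and> am \<in> orth (defKs T Ts) \<and> a = (x0, T x0) + (ap, 0) + (0, am))"

definition Gamma_minus :: "('a::complex_inner \<Rightarrow> 'a) \<Rightarrow> ('a \<Rightarrow> 'a) \<Rightarrow> 'a \<times> 'a \<Rightarrow> 'a" where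
  "Gamma_minus T Ts a = (THE am. \<exists>x0 ap. x0 \<in> defK T Ts \<and> ap \<in> orth (defK T Ts)
      \<and> am \<in> orth (defKs T Ts) \<and> a = (x0, T x0) + (ap, 0) + (0, am))"

end

theory Submission
  imports Defs
begin
lemma ci_add_left: "cinner (x+y) z = cinner x z + cinner (y::'a::complex_inner) z"
  by (metis cinner_commute cinner_add_right complex_cnj_add)
lemma ci_scaleC_left: "cinner (scaleC c x) y = cnj c * cinner (x::'a::complex_inner) y"
  by (metis cinner_commute cinner_scaleC_right complex_cnj_mult)
lemma ci_zero_right[simp]: "cinner (x::'a::complex_inner) 0 = 0"
  using cinner_add_right[of x 0 0] by simp
lemma ci_zero_left[simp]: "cinner 0 (x::'a::complex_inner) = 0"
  using ci_add_left[of 0 0 x] by simp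
lemma ci_minus_right: "cinner (x::'a::complex_inner) (-y) = - cinner x y"
  proof - have "cinner x y + cinner x (-y) = 0" using cinner_add_right[of x y "-y"] by simp
  then show ?thesis by (simp add: add_eq_0_iff) qed
lemma ci_minus_left: "cinner (-x) (y::'a::complex_inner) = - cinner x y"
  proof - have "cinner x y + cinner (-x) y = 0" using ci_add_left[of x "-x" y] by simp
  then show ?thesis by (simp add: add_eq_0_iff) qed
lemma ci_diff_right: "cinner (x::'a::complex_inner) (y - z) = cinner x y - cinner x z"
  unfolding diff_conv_add_uminus cinner_add_right ci_minus_right by simp
lemma ci_diff_left: "cinner (x - y) (z::'a::complex_inner) = cinner x z - cinner y z"
  unfolding diff_conv_add_uminus ci_add_left ci_minus_left by simp
lemma norm_sq_ci: "(norm (x::'a::complex_inner))^2 = Re (cinner x x)"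
  unfolding norm_eq_sqrt_cinner by (rule real_sqrt_pow2[OF cinner_self_nonneg])
lemma ci_self: "cinner x (x::'a::complex_inner) = complex_of_real ((norm x)^2)"
  unfolding norm_sq_ci using cinner_self_real[of x] by (simp add: complex_eq_iff)
lemma ci_Re_commute: "Re (cinner y (x::'a::complex_inner)) = Re (cinner x y)"
  using cinner_commute[of y x] by simp
lemma norm_add_sq: "(norm (x+y))^2 = (norm x)^2 + (norm y)^2 + 2 * Re (cinner x (y::'a::complex_inner))"
proof -
  have "cinner (x+y) (x+y) = cinner x x + cinner x y + cinner y x + cinner y y"
    by (simp add: cinner_add_right ci_add_left)
  then have "(norm (x+y))^2 = Re (cinner x x + cinner x y + cinner y x + cinner y y)"
    by (metis ci_self Re_complex_of_real)
  then show ?thesis by (simp add: ci_self ci_Re_commute[of y x])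
qed
lemma norm_diff_sq: "(norm (x-y))^2 = (norm x)^2 + (norm y)^2 - 2 * Re (cinner x (y::'a::complex_inner))"
  using norm_add_sq[of x "-y"] by (simp add: ci_minus_right)
lemma Re_ci_le: "Re (cinner x (y::'a::complex_inner)) \<le> norm x * norm y"
proof -
  have "(norm (x+y))^2 \<le> (norm x + norm y)^2"
    by (rule power_mono[OF norm_triangle_ineq norm_ge_zero])
  moreover have "(norm x + norm y)^2 = (norm x)^2 + (norm y)^2 + 2 * (norm x * norm y)"
    by (simp add: power2_sum)
  ultimately show ?thesis unfolding norm_add_sq by linarith
qed
lemma scaleC_zero_right[simp]: "scaleC c (0::'a::complex_inner) = 0"
  using scaleC_add_right[of c "0::'a" 0] by simp
lemma scaleC_minus_right: "scaleC c (-x::'a::complex_inner) = - scaleC c x"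
  proof - have "scaleC c x + scaleC c (-x) = 0" using scaleC_add_right[of c x "-x"] by simp
  then show ?thesis by (simp add: add_eq_0_iff) qed
lemma scaleC_diff_right: "scaleC c (x - y::'a::complex_inner) = scaleC c x - scaleC c y"
  unfolding diff_conv_add_uminus scaleC_add_right scaleC_minus_right by simp
lemma scaleR_scaleC: "scaleR r x = scaleC (complex_of_real r) (x::'a::complex_inner)"
  by (simp add: scaleC_of_real)
lemma norm_scaleC: "norm (scaleC c x) = cmod c * norm (x::'a::complex_inner)"
proof -
  have "cinner (scaleC c x) (scaleC c x) = cnj c * c * cinner x x"
    by (simp add: ci_scaleC_left cinner_scaleC_right)
  then have "complex_of_real ((norm (scaleC c x))^2) = cnj c * c * cinner x x"
    by (simp add: ci_self)
  also have "\<dots> = complex_of_real ((cmod c * norm x)^2)"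
    using complex_norm_square[of c] by (simp add: ci_self mult.commute power_mult_distrib)
  finally have "(norm (scaleC c x))^2 = (cmod c * norm x)^2" using of_real_eq_iff by blast
  then show ?thesis by (simp add: power2_eq_iff_nonneg)
qed
lemma ci_ext: "(\<And>z. cinner z a = cinner z b) \<Longrightarrow> a = (b::'a::complex_inner)"
proof -
  assume "\<And>z. cinner z a = cinner z b"
  then have "cinner (a-b) (a-b) = 0" by (simp add: ci_diff_right)
  then have "a - b = 0" using cinner_self_eq_zero by blast
  then show ?thesis by simp
qed
lemma cmod_ci_le: "cmod (cinner y (x::'a::complex_inner)) \<le> 2 * norm y * norm x"
proof -
  have 1: "\<bar>Re (cinner y x)\<bar> \<le> norm y * norm x"
  proof -
    have a: "Re (cinner y x) \<le> norm y * norm x" by (rule Re_ci_le)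
    have b: "Re (cinner y (-x)) \<le> norm y * norm (-x)" by (rule Re_ci_le)
    then have "- Re (cinner y x) \<le> norm y * norm x" unfolding ci_minus_right norm_minus_cancel by simp
    then show ?thesis unfolding abs_le_iff using a by linarith
  qed
  have e: "Re (cinner (scaleC \<i> y) x) = Im (cinner y x)" by (simp add: ci_scaleC_left)
  have n: "norm (scaleC \<i> y) = norm y" by (simp add: norm_scaleC)
  have 2: "\<bar>Im (cinner y x)\<bar> \<le> norm y * norm x"
  proof -
    have a: "Re (cinner (scaleC \<i> y) x) \<le> norm (scaleC \<i> y) * norm x" by (rule Re_ci_le)
    have b: "Re (cinner (scaleC \<i> y) (-x)) \<le> norm (scaleC \<i> y) * norm (-x)" by (rule Re_ci_le)
    then have "- Im (cinner y x) \<le> norm y * norm x" unfolding ci_minus_right norm_minus_cancel n uminus_complex.sel e .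
    moreover have "Im (cinner y x) \<le> norm y * norm x" using a unfolding e n .
    ultimately show ?thesis unfolding abs_le_iff by linarith
  qed
  show ?thesis using cmod_le[of "cinner y x"] 1 2 by linarith
qed
lemma bl_ci: "bounded_linear (cinner (y::'a::complex_inner))"
  apply (rule bounded_linear_intro[where K="2 * norm y"])
    apply (simp add: cinner_add_right)
   apply (simp add: scaleR_scaleC cinner_scaleC_right scaleR_conv_of_real)
  apply (rule order_trans[OF cmod_ci_le]) by (simp add: mult_ac)
lemma cont_ci: "continuous_on UNIV (cinner (y::'a::complex_inner))"
  using bl_ci linear_continuous_on bounded_linear.linear by blast
lemma closed_csubspace_orth: "closed_csubspace (orth (S::'a::complex_inner set))"
proof -
  have "orth S = (\<Inter>y\<in>S. {x. cinner y x = (\<lambda>_. 0) x})" by (auto simp: orth_def)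
  moreover have "closed {x. cinner y x = (\<lambda>_. 0) x}" for y
    by (rule closed_Collect_eq[OF cont_ci continuous_on_const])
  ultimately have "closed (orth S)" by auto
  moreover have "csubspace (orth S)"
    by (auto simp: csubspace_def orth_def cinner_add_right cinner_scaleC_right)
  ultimately show ?thesis by (simp add: closed_csubspace_def)
qed

lemma quad_zero:
  fixes r N :: real
  assumes N: "0 \<le> N" and h: "\<And>t. 2 * t * r \<le> t^2 * N"
  shows "r = 0"
proof -
  define a where "a = N + 1"
  have a0: "0 < a" using N a_def by simp
  define t where "t = r / a"
  have ta: "t * a = r" using a0 by (simp add: t_def)
  have "2 * t * r * a^2 \<le> t^2 * N * a^2" using h[of t] by (rule mult_right_mono) simp
  moreover have "2 * t * r * a^2 = 2 * r * a * (t * a)" by (simp add: power2_eq_square algebra_simps)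
  moreover have "t^2 * N * a^2 = (t * a)^2 * N" by (simp add: power_mult_distrib algebra_simps)
  ultimately have "2 * r * a * r \<le> r^2 * N" unfolding ta by simp
  then have "2 * (r * r) * N + 2 * (r * r) \<le> (r * r) * N" unfolding a_def by (simp add: algebra_simps power2_eq_square)
  moreover have "0 \<le> (r * r) * N" using N by simp
  moreover have "0 \<le> r * r" by simp
  ultimately have "r * r = 0" by linarith
  then show ?thesis by simp
qed

lemma proj_exists:
  fixes M :: "'a::chilbert_space set" and v :: 'a
  assumes "closed_csubspace M"
  shows "\<exists>m\<in>M. v - m \<in> orth M"
proof -
  have cM: "closed M" and sM: "csubspace M" using assms closed_csubspace_def by auto
  have M0: "0 \<in> M" and Madd: "\<And>x y. x\<in>M \<Longrightarrow> y\<in>M \<Longrightarrow> x+y\<in>M"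
    and Msc: "\<And>c x. x\<in>M \<Longrightarrow> scaleC c x \<in> M" using sM unfolding csubspace_def by blast+
  have MR: "\<And>r x. x\<in>M \<Longrightarrow> scaleR r x \<in> M" using Msc by (simp add: scaleR_scaleC)
  define D where "D = (\<lambda>m. norm (v - m)) ` M"
  define d where "d = Inf D"
  have Dne: "D \<noteq> {}" using M0 D_def by auto
  have bdd: "bdd_below D" unfolding D_def by (rule bdd_belowI[of _ 0]) auto
  have dle: "\<And>m. m\<in>M \<Longrightarrow> d \<le> norm (v-m)"
    unfolding d_def D_def using bdd D_def by (auto intro: cInf_lower)
  have d0: "0 \<le> d" unfolding d_def using Dne by (rule cInf_greatest) (auto simp: D_def)
  define e :: "nat \<Rightarrow> real" where "e n = inverse (real (Suc n))" for n
  have e0: "\<And>n. 0 < e n" by (simp add: e_def)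
  have ex: "\<exists>m\<in>M. (norm (v-m))^2 < d^2 + e n" for n
  proof -
    have "sqrt (d^2) < sqrt (d^2 + e n)" using e0[of n] by (intro real_sqrt_less_mono) simp
    then have "d < sqrt (d^2 + e n)" using d0 by simp
    then obtain x where "x \<in> D" "x < sqrt (d^2 + e n)" using cInf_lessD[OF Dne] d_def by blast
    then obtain m where m: "m \<in> M" "norm (v - m) < sqrt (d^2 + e n)" by (auto simp: D_def)
    have "(norm (v-m))^2 < (sqrt (d^2 + e n))^2"
      by (rule power_strict_mono[OF m(2)]) auto
    also have "\<dots> = d^2 + e n" using e0[of n] by (simp add: add_nonneg_nonneg)
    finally show ?thesis using m(1) by blast
  qed
  then obtain mm where mm: "\<And>n. mm n \<in> M" "\<And>n. (norm (v - mm n))^2 < d^2 + e n" by metis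
  have par: "(norm (mm p - mm q))^2 \<le> 2 * e p + 2 * e q" for p q
  proof -
    define x where "x = v - mm q"
    define y where "y = v - mm p"
    define mid where "mid = scaleR (1/2) (mm p + mm q)"
    have midM: "mid \<in> M" unfolding mid_def by (intro MR Madd mm)
    have xy: "x + y = scaleR 2 (v - mid)" unfolding x_def y_def mid_def
      by (simp add: scaleR_right_diff_distrib scaleR_2 algebra_simps)
    have "norm (x + y) = 2 * norm (v - mid)" unfolding xy by simp
    then have "(norm (x+y))^2 \<ge> 4 * d^2" using dle[OF midM] d0
      by (simp add: power2_eq_square mult_mono)
    moreover have xmy: "x - y = mm p - mm q" unfolding x_def y_def by simp
    moreover have "(norm (x+y))^2 + (norm (mm p - mm q))^2 = 2 * (norm x)^2 + 2 * (norm y)^2"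
      unfolding xmy[symmetric] norm_add_sq norm_diff_sq by simp
    moreover have "(norm x)^2 < d^2 + e q" "(norm y)^2 < d^2 + e p" unfolding x_def y_def using mm by auto
    ultimately show ?thesis by linarith
  qed
  have "Cauchy mm"
  proof (rule CauchyI)
    fix eps :: real assume "0 < eps"
    then have "0 < eps^2 / 4" by simp
    then obtain N where N: "e N < eps^2 / 4" using reals_Archimedean e_def by metis
    have "\<forall>p\<ge>N. \<forall>q\<ge>N. norm (mm p - mm q) < eps"
    proof (intro allI impI)
      fix p q assume "N \<le> p" "N \<le> q"
      then have "e p \<le> e N" "e q \<le> e N" unfolding e_def by (auto intro!: le_imp_inverse_le)
      then have "(norm (mm p - mm q))^2 < eps^2" using par[of p q] N by linarith
      then show "norm (mm p - mm q) < eps" using \<open>0 < eps\<close> power_less_imp_less_base[of "norm (mm p - mm q)" 2 eps] by simp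
    qed
    then show "\<exists>M. \<forall>p\<ge>M. \<forall>q\<ge>M. norm (mm p - mm q) < eps" by blast
  qed
  then obtain m where lim: "mm \<longlonglongrightarrow> m" using Cauchy_convergent_iff convergent_def by blast
  have mM: "m \<in> M" by (rule closed_sequentially[OF cM mm(1) lim])
  have "(\<lambda>n. (norm (v - mm n))^2) \<longlonglongrightarrow> (norm (v - m))^2"
    by (intro tendsto_intros lim)
  moreover have "(\<lambda>n. d^2 + e n) \<longlonglongrightarrow> d^2 + 0"
    unfolding e_def by (intro tendsto_intros LIMSEQ_inverse_real_of_nat)
  ultimately have "(norm (v - m))^2 \<le> d^2 + 0"
    by (rule LIMSEQ_le) (use mm(2) less_imp_le in blast)
  then have minim: "(norm (v - m))^2 \<le> (norm (v - m'))^2" if "m' \<in> M" for m'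
    using dle[OF that] d0 power_mono[of d "norm (v - m')" 2] by simp
  define w where "w = v - m"
  have reZ: "Re (cinner w k) = 0" if k: "k \<in> M" for k
  proof (rule quad_zero[of "(norm k)^2"])
    fix t :: real
    have "m + scaleR t k \<in> M" by (intro Madd MR mM k)
    then have "(norm w)^2 \<le> (norm (w - scaleR t k))^2" using minim unfolding w_def
      by (metis diff_diff_eq)
    also have "\<dots> = (norm w)^2 + t^2 * (norm k)^2 - 2 * t * Re (cinner w k)"
      unfolding norm_diff_sq by (simp add: scaleR_scaleC cinner_scaleC_right norm_scaleC power_mult_distrib)
    finally show "2 * t * Re (cinner w k) \<le> t^2 * (norm k)^2" by simp
  qed simp
  have "w \<in> orth M"
  proof -
    have "cinner k w = 0" if k: "k \<in> M" for k
    proof -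
      have a: "Re (cinner w k) = 0" by (rule reZ[OF k])
      have "Re (cinner w (scaleC \<i> k)) = 0" by (rule reZ[OF Msc[OF k]])
      then have b: "Im (cinner w k) = 0" by (simp add: cinner_scaleC_right)
      have "cinner w k = 0" using a b by (simp add: complex_eq_iff)
      then show ?thesis using cinner_commute[of k w] by simp
    qed
    then show ?thesis by (simp add: orth_def)
  qed
  then show ?thesis using mM w_def by blast
qed

locale cs =
  fixes T Ts :: "'a::chilbert_space \<Rightarrow> 'a"
  assumes contr: "contraction T" and adj: "is_adjoint T Ts"
begin

abbreviation "K \<equiv> defK T Ts"
abbreviation "Ks \<equiv> defKs T Ts"

lemma Tadd: "T (x + y) = T x + T y" and Tsc: "T (scaleC c x) = scaleC c (T x)"
  using contr unfolding contraction_def bounded_clinear_def clinear_def by auto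
lemma Tnorm: "norm (T x) \<le> norm x" using contr unfolding contraction_def by auto
lemma T0: "T 0 = 0" using Tadd[of 0 0] by simp
lemma Tminus: "T (-x) = - T x"
proof - have "T x + T (-x) = 0" using Tadd[of x "-x"] T0 by simp
  then show ?thesis by (simp add: add_eq_0_iff) qed
lemma Tdiff: "T (x - y) = T x - T y"
  unfolding diff_conv_add_uminus Tadd Tminus by simp
lemma adj1: "cinner (T x) y = cinner x (Ts y)" using adj unfolding is_adjoint_def by auto
lemma adj2: "cinner y (T x) = cinner (Ts y) x"
  using adj1[of x y] cinner_commute[of y "T x"] cinner_commute[of "Ts y" x] by simp
lemma Tsadd: "Ts (x + y) = Ts x + Ts y"
  by (rule ci_ext) (simp add: adj1[symmetric] cinner_add_right)
lemma Tssc: "Ts (scaleC c x) = scaleC c (Ts x)"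
  by (rule ci_ext) (simp add: adj1[symmetric] cinner_scaleC_right)
lemma Ts0: "Ts 0 = 0" using Tsadd[of 0 0] by simp
lemma Tsminus: "Ts (-x) = - Ts x"
proof - have "Ts x + Ts (-x) = 0" using Tsadd[of x "-x"] Ts0 by simp
  then show ?thesis by (simp add: add_eq_0_iff) qed
lemma Tsdiff: "Ts (x - y) = Ts x - Ts y"
  unfolding diff_conv_add_uminus Tsadd Tsminus by simp
lemma Tsnorm: "norm (Ts y) \<le> norm y"
proof -
  have "(norm (Ts y))^2 = Re (cinner (T (Ts y)) y)" by (simp add: norm_sq_ci adj1)
  also have "\<dots> \<le> norm (T (Ts y)) * norm y" by (rule Re_ci_le)
  also have "\<dots> \<le> norm (Ts y) * norm y" by (rule mult_right_mono[OF Tnorm]) simp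
  finally have h: "norm (Ts y) * norm (Ts y) \<le> norm (Ts y) * norm y" by (simp add: power2_eq_square)
  show ?thesis
  proof (cases "norm (Ts y) = 0")
    case True then show ?thesis by simp
  next
    case False then have "0 < norm (Ts y)" by simp
    then show ?thesis using h by simp
  qed
qed
lemma blT: "bounded_linear T"
  by (rule bounded_linear_intro[where K=1]) (auto simp: Tadd scaleR_scaleC Tsc Tnorm)
lemma blTs: "bounded_linear Ts"
  by (rule bounded_linear_intro[where K=1]) (auto simp: Tsadd scaleR_scaleC Tssc Tsnorm)

lemma memK: "x \<in> K \<longleftrightarrow> Ts (T x) = x" unfolding defK_def by auto
lemma memKs: "y \<in> Ks \<longleftrightarrow> T (Ts y) = y" unfolding defKs_def by auto
lemma TK: "x \<in> K \<Longrightarrow> T x \<in> Ks" unfolding memK memKs by simp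
lemma TsKs: "y \<in> Ks \<Longrightarrow> Ts y \<in> K" unfolding memK memKs by simp

lemma K_closed: "closed_csubspace K"
proof -
  have bl: "bounded_linear (\<lambda>x. x - Ts (T x))"
    by (intro bounded_linear_sub bounded_linear_ident bounded_linear_compose[OF blTs blT])
  have "closed {x. (\<lambda>x. x - Ts (T x)) x = (\<lambda>_. 0) x}"
    by (rule closed_Collect_eq[OF linear_continuous_on[OF bl] continuous_on_const])
  then have "closed K" by (simp add: defK_def)
  moreover have "csubspace K"
    unfolding csubspace_def by (auto simp: memK Tadd Tsadd T0 Ts0 Tsc Tssc)
  ultimately show ?thesis by (simp add: closed_csubspace_def)
qed
lemma Ks_closed: "closed_csubspace Ks"
proof -
  have bl: "bounded_linear (\<lambda>x. x - T (Ts x))"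
    by (intro bounded_linear_sub bounded_linear_ident bounded_linear_compose[OF blT blTs])
  have "closed {x. (\<lambda>x. x - T (Ts x)) x = (\<lambda>_. 0) x}"
    by (rule closed_Collect_eq[OF linear_continuous_on[OF bl] continuous_on_const])
  then have "closed Ks" by (simp add: defKs_def)
  moreover have "csubspace Ks"
    unfolding csubspace_def by (auto simp: memKs Tadd Tsadd T0 Ts0 Tsc Tssc)
  ultimately show ?thesis by (simp add: closed_csubspace_def)
qed

lemma sub_facts:
  assumes "closed_csubspace S"
  shows "0 \<in> S" "x \<in> S \<Longrightarrow> y \<in> S \<Longrightarrow> x + y \<in> S" "x \<in> S \<Longrightarrow> scaleC c x \<in> S"
  using assms unfolding closed_csubspace_def csubspace_def by blast+

lemma sub_diff:
  assumes "closed_csubspace S" "x \<in> S" "y \<in> S"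
  shows "x - y \<in> S"
proof -
  have "scaleC (-1) y \<in> S" using sub_facts(3)[OF assms(1) assms(3)] .
  moreover have "scaleC (-1) y = - y" using scaleR_scaleC[of "-1" y] by simp
  ultimately have "x + - y \<in> S" using sub_facts(2)[OF assms(1) assms(2)] by metis
  then show ?thesis by (simp only: diff_conv_add_uminus)
qed

lemma orthD: "x \<in> orth S \<Longrightarrow> y \<in> S \<Longrightarrow> cinner y x = 0" unfolding orth_def by auto
lemma orthD': "x \<in> orth S \<Longrightarrow> y \<in> S \<Longrightarrow> cinner x y = 0"
  using orthD[of x S y] cinner_commute[of x y] by simp

lemma K_orth_zero: "x \<in> K \<Longrightarrow> x \<in> orth K \<Longrightarrow> x = 0"
  using orthD[of x K x] cinner_self_eq_zero by blast

end

context cs begin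

definition dec :: "'a \<times> 'a \<Rightarrow> 'a \<Rightarrow> 'a \<Rightarrow> 'a \<Rightarrow> bool" where
  "dec a x0 ap am \<longleftrightarrow> x0 \<in> K \<and> ap \<in> orth K \<and> am \<in> orth Ks \<and> a = (x0 + ap, T x0 + am)"

lemma dec_iff: "(x0 \<in> K \<and> ap \<in> orth K \<and> am \<in> orth Ks \<and> a = (x0, T x0) + (ap, 0) + (0, am))
    \<longleftrightarrow> dec a x0 ap am"
  unfolding dec_def by simp

lemma dec_unique:
  assumes "dec a x0 ap am" "dec a y0 bp bm"
  shows "x0 = y0 \<and> ap = bp \<and> am = bm"
proof -
  have a: "x0 \<in> K" "ap \<in> orth K" "am \<in> orth Ks" "y0 \<in> K" "bp \<in> orth K" "bm \<in> orth Ks"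
    using assms unfolding dec_def by auto
  have e1: "x0 + ap = y0 + bp" and e2: "T x0 + am = T y0 + bm" using assms unfolding dec_def by auto
  have "x0 - y0 = bp - ap" using e1 by (simp add: algebra_simps)
  moreover have "x0 - y0 \<in> K" by (rule sub_diff[OF K_closed a(1) a(4)])
  moreover have "bp - ap \<in> orth K" by (rule sub_diff[OF closed_csubspace_orth a(5) a(2)])
  ultimately have "x0 - y0 = 0" using K_orth_zero by metis
  then have xy: "x0 = y0" by simp
  then have "ap = bp" using e1 by simp
  moreover have "am = bm" using e2 xy by simp
  ultimately show ?thesis using xy by simp
qed

lemma dec_Gamma:
  assumes "dec a x0 ap am"
  shows "Gamma_plus T Ts a = ap" "Gamma_minus T Ts a = am"
proof -
  show "Gamma_plus T Ts a = ap"
    unfolding Gamma_plus_def dec_iff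
  proof (rule the_equality)
    show "\<exists>x0' am'. dec a x0' ap am'" using assms by blast
    show "\<And>ap'. \<exists>x0' am'. dec a x0' ap' am' \<Longrightarrow> ap' = ap" using dec_unique assms by blast
  qed
  show "Gamma_minus T Ts a = am"
    unfolding Gamma_minus_def dec_iff
  proof (rule the_equality)
    show "\<exists>x0' ap'. dec a x0' ap' am" using assms by blast
    show "\<And>am'. \<exists>x0' ap'. dec a x0' ap' am' \<Longrightarrow> am' = am" using dec_unique assms by blast
  qed
qed

lemma A_T_mem: "a \<in> A_T T Ts \<longleftrightarrow> (\<exists>x. x \<in> K \<and> a = (x, T x))"
  unfolding A_T_def by auto

lemma dec_sorth:
  assumes "dec a x0 ap am"
  shows "a \<in> s_orth (A_T T Ts)"
proof -
  have a: "x0 \<in> K" "ap \<in> orth K" "am \<in> orth Ks" "a = (x0 + ap, T x0 + am)"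
    using assms unfolding dec_def by auto
  have "sympl a b = 0" if b: "b \<in> A_T T Ts" for b
  proof -
    obtain y where y: "y \<in> K" "b = (y, T y)" using b A_T_mem by blast
    have 1: "cinner ap y = 0" by (rule orthD'[OF a(2) y(1)])
    have 2: "cinner am (T y) = 0" by (rule orthD'[OF a(3) TK[OF y(1)]])
    have 3: "cinner (T x0) (T y) = cinner x0 y" using adj1[of x0 "T y"] y(1) memK by simp
    show ?thesis unfolding sympl_def a(4) y(2)
      by (simp add: ci_add_left 1 2 3)
  qed
  then show ?thesis unfolding s_orth_def by blast
qed

lemma sorth_dec:
  assumes "a \<in> s_orth (A_T T Ts)"
  shows "\<exists>x0 ap am. dec a x0 ap am \<and> norm x0 \<le> norm (snd a)"
proof -
  obtain u v where uv: "a = (u, v)" by fastforce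
  obtain v1 where v1: "v1 \<in> Ks" "v - v1 \<in> orth Ks" using proj_exists[OF Ks_closed, of v] by blast
  define am where "am = v - v1"
  define x0 where "x0 = Ts v1"
  define ap where "ap = u - x0"
  have x0K: "x0 \<in> K" unfolding x0_def by (rule TsKs[OF v1(1)])
  have Tx0: "T x0 = v1" unfolding x0_def using v1(1) memKs by simp
  have apK: "ap \<in> orth K"
  proof -
    have "cinner k ap = 0" if k: "k \<in> K" for k
    proof -
      have "sympl a (k, T k) = 0" using assms k unfolding s_orth_def A_T_def by blast
      then have "\<i> * cinner u k - \<i> * cinner v (T k) = 0" unfolding sympl_def uv by simp
      then have "cinner u k = cinner v (T k)" by simp
      then have "cinner k u = cinner (T k) v" using cinner_commute[of k u] cinner_commute[of "T k" v] by simp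
      also have "\<dots> = cinner (T k) v1 + cinner (T k) am" unfolding am_def by (simp add: ci_diff_right)
      also have "cinner (T k) am = 0" using orthD[OF v1(2) TK[OF k]] am_def by simp
      finally have "cinner k u = cinner (T k) v1" by simp
      moreover have "cinner k x0 = cinner (T k) v1" unfolding x0_def by (simp add: adj1)
      ultimately show ?thesis unfolding ap_def by (simp add: ci_diff_right)
    qed
    then show ?thesis unfolding orth_def by blast
  qed
  have d: "dec a x0 ap am" unfolding dec_def uv using x0K apK v1(2) Tx0
    by (simp add: am_def ap_def)
  have "norm x0 \<le> norm v1" unfolding x0_def by (rule Tsnorm)
  also have "norm v1 \<le> norm v"
  proof -
    have "cinner v1 am = 0" using orthD[OF v1(2) v1(1)] am_def by simp
    then have "(norm v)^2 = (norm v1)^2 + (norm am)^2"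
      using norm_add_sq[of v1 am] unfolding am_def by simp
    then have "(norm v1)^2 \<le> (norm v)^2" by simp
    then show ?thesis by (rule power2_le_imp_le) simp
  qed
  finally show ?thesis using d uv by auto
qed

end

context cs begin

lemma dec_add: "dec a x0 ap am \<Longrightarrow> dec b y0 bp bm \<Longrightarrow> dec (a + b) (x0 + y0) (ap + bp) (am + bm)"
  unfolding dec_def
  using sub_facts(2)[OF K_closed] sub_facts(2)[OF closed_csubspace_orth, of _ K]
    sub_facts(2)[OF closed_csubspace_orth, of _ Ks]
  by (auto simp: Tadd algebra_simps)

lemma dec_scale: "dec a x0 ap am \<Longrightarrow> dec (scaleC_pair c a) (scaleC c x0) (scaleC c ap) (scaleC c am)"
  unfolding dec_def scaleC_pair_def
  using sub_facts(3)[OF K_closed] sub_facts(3)[OF closed_csubspace_orth, of _ K]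
    sub_facts(3)[OF closed_csubspace_orth, of _ Ks]
  by (auto simp: Tsc scaleC_add_right)

lemma main: "boundary_quadruple (A_T T Ts) (orth K) (orth Ks) (Gamma_plus T Ts) (Gamma_minus T Ts)"
proof -
  let ?A = "A_T T Ts"
  let ?Gp = "Gamma_plus T Ts"
  let ?Gm = "Gamma_minus T Ts"
  have A_dec: "a \<in> ?A \<Longrightarrow> dec a (fst a) 0 0" for a
    unfolding A_T_mem dec_def using sub_facts(1)[OF closed_csubspace_orth] by auto
  have cA: "closed ?A"
  proof -
    have f1: "bounded_linear (\<lambda>a::'a\<times>'a. Ts (T (fst a)))"
      by (rule bounded_linear_compose[OF blTs bounded_linear_compose[OF blT bounded_linear_fst]])
    have bl1: "bounded_linear (\<lambda>a::'a\<times>'a. fst a - Ts (T (fst a)))"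
      by (rule bounded_linear_sub[OF bounded_linear_fst f1])
    have f2: "bounded_linear (\<lambda>a::'a\<times>'a. T (fst a))"
      by (rule bounded_linear_compose[OF blT bounded_linear_fst])
    have bl2: "bounded_linear (\<lambda>a::'a\<times>'a. snd a - T (fst a))"
      by (rule bounded_linear_sub[OF bounded_linear_snd f2])
    have c1: "closed {a. (\<lambda>a::'a\<times>'a. fst a - Ts (T (fst a))) a = (\<lambda>_. 0) a}"
      by (rule closed_Collect_eq[OF linear_continuous_on[OF bl1] continuous_on_const])
    have c2: "closed {a. (\<lambda>a::'a\<times>'a. snd a - T (fst a)) a = (\<lambda>_. 0) a}"
      by (rule closed_Collect_eq[OF linear_continuous_on[OF bl2] continuous_on_const])
    have "?A = {a. (\<lambda>a::'a\<times>'a. fst a - Ts (T (fst a))) a = (\<lambda>_. 0) a}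
             \<inter> {a. (\<lambda>a::'a\<times>'a. snd a - T (fst a)) a = (\<lambda>_. 0) a}"
      unfolding set_eq_iff A_T_mem by (auto simp: defK_def)
    then show ?thesis using c1 c2 by (simp add: closed_Int)
  qed
  have A0: "(0::'a\<times>'a) \<in> ?A"
    unfolding A_T_mem using sub_facts(1)[OF K_closed] T0 by (auto simp: zero_prod_def)
  have Aadd: "\<forall>a\<in>?A. \<forall>b\<in>?A. a + b \<in> ?A"
    using sub_facts(2)[OF K_closed] by (auto simp: A_T_mem Tadd)
  have Asc: "\<forall>c. \<forall>a\<in>?A. scaleC_pair c a \<in> ?A"
    using sub_facts(3)[OF K_closed] by (auto simp: A_T_mem scaleC_pair_def Tsc)
  have iso: "isotropic ?A"
    unfolding isotropic_def using dec_sorth[OF A_dec] unfolding s_orth_def by blast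
  have Gin: "\<forall>a\<in>s_orth ?A. ?Gp a \<in> orth K \<and> ?Gm a \<in> orth Ks"
  proof
    fix a assume "a \<in> s_orth ?A"
    then obtain x0 ap am where d: "dec a x0 ap am" using sorth_dec by blast
    then show "?Gp a \<in> orth K \<and> ?Gm a \<in> orth Ks" using dec_Gamma[OF d] unfolding dec_def by simp
  qed
  have Glin: "\<forall>a\<in>s_orth ?A. \<forall>b\<in>s_orth ?A. ?Gp (a + b) = ?Gp a + ?Gp b \<and> ?Gm (a + b) = ?Gm a + ?Gm b"
  proof (intro ballI)
    fix a b assume "a \<in> s_orth ?A" "b \<in> s_orth ?A"
    then obtain x0 ap am y0 bp bm where d: "dec a x0 ap am" "dec b y0 bp bm" using sorth_dec by metis
    show "?Gp (a + b) = ?Gp a + ?Gp b \<and> ?Gm (a + b) = ?Gm a + ?Gm b"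
      using dec_Gamma[OF d(1)] dec_Gamma[OF d(2)] dec_Gamma[OF dec_add[OF d]] by simp
  qed
  have Gsc: "\<forall>c. \<forall>a\<in>s_orth ?A. ?Gp (scaleC_pair c a) = scaleC c (?Gp a) \<and> ?Gm (scaleC_pair c a) = scaleC c (?Gm a)"
  proof (intro allI ballI)
    fix c a assume "a \<in> s_orth ?A"
    then obtain x0 ap am where d: "dec a x0 ap am" using sorth_dec by blast
    show "?Gp (scaleC_pair c a) = scaleC c (?Gp a) \<and> ?Gm (scaleC_pair c a) = scaleC c (?Gm a)"
      using dec_Gamma[OF d] dec_Gamma[OF dec_scale[OF d]] by simp
  qed
  have Gbd: "\<exists>C. \<forall>a\<in>s_orth ?A. norm (?Gp a, ?Gm a) \<le> C * norm a"
  proof (intro exI ballI)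
    fix a assume "a \<in> s_orth ?A"
    then obtain x0 ap am where d: "dec a x0 ap am" and nx: "norm x0 \<le> norm (snd a)" using sorth_dec by blast
    have e: "fst a = x0 + ap" "snd a = T x0 + am" using d unfolding dec_def by auto
    have "norm ap \<le> norm (fst a) + norm x0"
      using norm_triangle_ineq4[of "fst a" x0] e(1) by (simp add: algebra_simps)
    moreover have "norm am \<le> norm (snd a) + norm (T x0)"
      using norm_triangle_ineq4[of "snd a" "T x0"] e(2) by (simp add: algebra_simps)
    moreover have "norm (T x0) \<le> norm x0" by (rule Tnorm)
    moreover have "norm (fst a) \<le> norm a" "norm (snd a) \<le> norm a"
      using norm_fst_le[of "fst a" "snd a"] norm_snd_le[of "snd a" "fst a"] by auto
    moreover have "norm (ap, am) \<le> norm ap + norm am" by (rule norm_Pair_le)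
    ultimately have "norm (ap, am) \<le> 4 * norm a" using nx by linarith
    then show "norm (?Gp a, ?Gm a) \<le> 4 * norm a" using dec_Gamma[OF d] by simp
  qed
  have Gsurj: "\<forall>p\<in>orth K. \<forall>m\<in>orth Ks. \<exists>a\<in>s_orth ?A. ?Gp a = p \<and> ?Gm a = m"
  proof (intro ballI)
    fix p m assume pm: "p \<in> orth K" "m \<in> orth Ks"
    have d: "dec (p, m) 0 p m" unfolding dec_def using pm sub_facts(1)[OF K_closed] T0 by simp
    show "\<exists>a\<in>s_orth ?A. ?Gp a = p \<and> ?Gm a = m"
      using dec_sorth[OF d] dec_Gamma[OF d] by blast
  qed
  have Gker: "{a\<in>s_orth ?A. ?Gp a = 0 \<and> ?Gm a = 0} = ?A"
  proof
    show "{a\<in>s_orth ?A. ?Gp a = 0 \<and> ?Gm a = 0} \<subseteq> ?A"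
    proof
      fix a assume a: "a \<in> {a\<in>s_orth ?A. ?Gp a = 0 \<and> ?Gm a = 0}"
      then obtain x0 ap am where d: "dec a x0 ap am" using sorth_dec by blast
      have "ap = 0" "am = 0" using a dec_Gamma[OF d] by auto
      then show "a \<in> ?A" using d unfolding dec_def A_T_mem by auto
    qed
    show "?A \<subseteq> {a\<in>s_orth ?A. ?Gp a = 0 \<and> ?Gm a = 0}"
      using A_dec dec_sorth dec_Gamma by blast
  qed
  have Green: "\<forall>a\<in>s_orth ?A. \<forall>b\<in>s_orth ?A.
          sympl a b = \<i> * cinner (?Gp a) (?Gp b) - \<i> * cinner (?Gm a) (?Gm b)"
  proof (intro ballI)
    fix a b assume "a \<in> s_orth ?A" "b \<in> s_orth ?A"
    then obtain x0 ap am y0 bp bm where d: "dec a x0 ap am" "dec b y0 bp bm" using sorth_dec by metis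
    have a: "x0 \<in> K" "ap \<in> orth K" "am \<in> orth Ks" "a = (x0 + ap, T x0 + am)"
         "y0 \<in> K" "bp \<in> orth K" "bm \<in> orth Ks" "b = (y0 + bp, T y0 + bm)"
      using d unfolding dec_def by auto
    have 1: "cinner x0 bp = 0" by (rule orthD[OF a(6) a(1)])
    have 2: "cinner ap y0 = 0" by (rule orthD'[OF a(2) a(5)])
    have 3: "cinner (T x0) bm = 0" by (rule orthD[OF a(7) TK[OF a(1)]])
    have 4: "cinner am (T y0) = 0" by (rule orthD'[OF a(3) TK[OF a(5)]])
    have 5: "cinner (T x0) (T y0) = cinner x0 y0" using adj1[of x0 "T y0"] a(5) memK by simp
    have "sympl a b = \<i> * cinner ap bp - \<i> * cinner am bm"
      unfolding sympl_def a(4) a(8) by (simp add: ci_add_left cinner_add_right 1 2 3 4 5 algebra_simps)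
    then show "sympl a b = \<i> * cinner (?Gp a) (?Gp b) - \<i> * cinner (?Gm a) (?Gm b)"
      using dec_Gamma[OF d(1)] dec_Gamma[OF d(2)] by simp
  qed
  show ?thesis unfolding boundary_quadruple_def
    using cA A0 Aadd Asc iso K_closed closed_csubspace_orth Gin Glin Gsc Gbd Gsurj Gker Green
    by blast
qed

end

theorem lemma4p3:
  fixes T Ts :: "'a::chilbert_space \<Rightarrow> 'a"
  assumes "separable_chilbert TYPE('a)"
    and "infinite_dimensional TYPE('a)"
    and "cnu_contraction T"
    and "is_adjoint T Ts"
  shows "boundary_quadruple (A_T T Ts) (orth (defK T Ts)) (orth (defKs T Ts))
           (Gamma_plus T Ts) (Gamma_minus T Ts)"
proof -
  interpret cs T Ts using assms(3,4) by unfold_locales (auto simp: cnu_contraction_def)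
  show ?thesis by (rule main)
qed

end
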